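(* Let $F/\mathbb{Q}_p$ be a finite extension with ring of integers $\mathcal{O}_F$, uniformizer $\pi$, and residue field $k_F$ of cardinality $q$. For $\lambda \in k_F^\times$ let $[\lambda] \in \mathcal{O}_F$ be the unique $(q-1)$-st root of unity lifting $\lambda$, and set $[0] = 0$. Let $I_0 = \{0\}$ and for $m \in \mathbb{N}$ let $I_m = \{ [\lambda_0] + \pi[\lambda_1] + \dots + \pi^{m-1}[\lambda_{m-1}] : (\lambda_0, \dots, \lambda_{m-1}) \in k_F^m \} \subset \mathcal{O}_F$. Then the set \[ \coprod_{m \geq 0} \left\{ \begin{pmatrix} \pi^m & 0 \\ \pi^{-m} \kappa & \pi^{-m} \end{pmatrix} : \kappa \in I_{2m} \right\} \ \sqcup\ \coprod_{m \geq 1} \left\{ \begin{pmatrix} 0 & -\pi^m \\ \pi^{-m} & -\pi^{-m+1}\kappa \end{pmatrix} : \kappa \in I_{2m-1} \right\} \] is a complete set of representatives (each coset represented exactly once) of the right cosets $\mathrm{SL}_2(\mathcal{O}_F) g$ of $\mathrm{SL}_2(\mathcal{O}_F)$ in $\mathrm{SL}_2(F)$. *)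

theory Defs
  imports Main
begin

text \<open>A p-adic field (finite extension of Q_p) is modelled as a field of characteristic 0
  with a normalized discrete valuation v (values on nonzero elements), complete for v,
  whose residue field is finite.\<close>

definition discrete_valuation :: "('a::field \<Rightarrow> int) \<Rightarrow> bool" where
  "discrete_valuation v \<longleftrightarrow>
     (\<forall>x y. x \<noteq> 0 \<longrightarrow> y \<noteq> 0 \<longrightarrow> v (x * y) = v x + v y) \<and>
     (\<forall>x y. x \<noteq> 0 \<longrightarrow> y \<noteq> 0 \<longrightarrow> x + y \<noteq> 0 \<longrightarrow> min (v x) (v y) \<le> v (x + y)) \<and>
     (\<exists>x. x \<noteq> 0 \<and> v x = 1)"

definition val_cauchy :: "('a::field \<Rightarrow> int) \<Rightarrow> (nat \<Rightarrow> 'a) \<Rightarrow> bool" where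
  "val_cauchy v s \<longleftrightarrow> (\<forall>N::int. \<exists>M. \<forall>m\<ge>M. \<forall>n\<ge>M. s m = s n \<or> N \<le> v (s m - s n))"

definition val_converges :: "('a::field \<Rightarrow> int) \<Rightarrow> (nat \<Rightarrow> 'a) \<Rightarrow> 'a \<Rightarrow> bool" where
  "val_converges v s L \<longleftrightarrow> (\<forall>N::int. \<exists>M. \<forall>n\<ge>M. s n = L \<or> N \<le> v (s n - L))"

definition val_complete :: "('a::field \<Rightarrow> int) \<Rightarrow> bool" where
  "val_complete v \<longleftrightarrow> (\<forall>s. val_cauchy v s \<longrightarrow> (\<exists>L. val_converges v s L))"

definition val_ring :: "('a::field \<Rightarrow> int) \<Rightarrow> 'a set" where
  "val_ring v = {x. x = 0 \<or> 0 \<le> v x}"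

text \<open>Reduction map O_F \<rightarrow> k_F = O_F / m_F; residue classes are represented as subsets of O_F.\<close>
definition residue :: "('a::field \<Rightarrow> int) \<Rightarrow> 'a \<Rightarrow> 'a set" where
  "residue v x = {y \<in> val_ring v. y = x \<or> 1 \<le> v (y - x)}"

definition residue_field :: "('a::field \<Rightarrow> int) \<Rightarrow> 'a set set" where
  "residue_field v = residue v ` val_ring v"

definition p_adic_field :: "('a::field_char_0 \<Rightarrow> int) \<Rightarrow> bool" where
  "p_adic_field v \<longleftrightarrow> discrete_valuation v \<and> val_complete v \<and> finite (residue_field v)"

definition uniformizer :: "('a::field \<Rightarrow> int) \<Rightarrow> 'a \<Rightarrow> bool" where
  "uniformizer v \<pi> \<longleftrightarrow> \<pi> \<noteq> 0 \<and> v \<pi> = 1"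

definition teich :: "('a::field \<Rightarrow> int) \<Rightarrow> 'a set \<Rightarrow> 'a" where
  "teich v l = (if l = residue v 0 then 0
     else (THE x. x \<in> val_ring v \<and> x ^ (card (residue_field v) - 1) = 1 \<and> residue v x = l))"

definition teich_digits :: "('a::field \<Rightarrow> int) \<Rightarrow> 'a \<Rightarrow> nat \<Rightarrow> 'a set" where
  "teich_digits v \<pi> m =
     {(\<Sum>i<m. \<pi> ^ i * teich v (lam i)) | lam. \<forall>i<m. lam i \<in> residue_field v}"

text \<open>2x2 matrices as tuples (a, b, c, d) = [[a, b], [c, d]].\<close>
type_synonym 'a mat2 = "'a \<times> 'a \<times> 'a \<times> 'a"

fun mat2_mult :: "'a::comm_ring_1 mat2 \<Rightarrow> 'a mat2 \<Rightarrow> 'a mat2" where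
  "mat2_mult (a, b, c, d) (a', b', c', d') =
     (a * a' + b * c', a * b' + b * d', c * a' + d * c', c * b' + d * d')"

fun mat2_det :: "'a::comm_ring_1 mat2 \<Rightarrow> 'a" where
  "mat2_det (a, b, c, d) = a * d - b * c"

definition SL2 :: "'a::comm_ring_1 set \<Rightarrow> 'a mat2 set" where
  "SL2 R = {(a, b, c, d). a \<in> R \<and> b \<in> R \<and> c \<in> R \<and> d \<in> R \<and> mat2_det (a, b, c, d) = 1}"

definition coset_index :: "('a::field \<Rightarrow> int) \<Rightarrow> 'a \<Rightarrow> ((nat \<times> 'a) + (nat \<times> 'a)) set" where
  "coset_index v \<pi> =
     Inl ` {(m, \<kappa>). \<kappa> \<in> teich_digits v \<pi> (2 * m)} \<union>
     Inr ` {(m, \<kappa>). 1 \<le> m \<and> \<kappa> \<in> teich_digits v \<pi> (2 * m - 1)}"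

fun coset_rep :: "'a::field \<Rightarrow> ((nat \<times> 'a) + (nat \<times> 'a)) \<Rightarrow> 'a mat2" where
  "coset_rep \<pi> (Inl (m, \<kappa>)) = (\<pi> ^ m, 0, inverse (\<pi> ^ m) * \<kappa>, inverse (\<pi> ^ m))"
| "coset_rep \<pi> (Inr (m, \<kappa>)) = (0, - (\<pi> ^ m), inverse (\<pi> ^ m), - (inverse (\<pi> ^ m) * \<pi> * \<kappa>))"

end

theory Submission imports Defs begin

definition vid :: "('a::field \<Rightarrow> int) \<Rightarrow> int \<Rightarrow> 'a set" where
  "vid v k = {z. z = 0 \<or> k \<le> v z}"

fun adj2 :: "'a::comm_ring_1 mat2 \<Rightarrow> 'a mat2" where
  "adj2 (a, b, c, d) = (d, - b, - c, a)"

lemma mat_assoc: "mat2_mult (mat2_mult A B) C = mat2_mult A (mat2_mult B C)"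
  by (cases A rule: prod_cases4; cases B rule: prod_cases4; cases C rule: prod_cases4)
     (simp add: algebra_simps)

lemma det_mult: "mat2_det (mat2_mult A B) = mat2_det A * mat2_det B"
  by (cases A rule: prod_cases4; cases B rule: prod_cases4) (simp add: algebra_simps)

lemma det_adj: "mat2_det (adj2 A) = mat2_det A"
  by (cases A rule: prod_cases4) (simp add: algebra_simps)

lemma adj_right: "mat2_det M = 1 \<Longrightarrow> mat2_mult M (adj2 M) = (1, 0, 0, 1)"
  by (cases M rule: prod_cases4) (simp add: algebra_simps)

lemma adj_left: "mat2_det M = 1 \<Longrightarrow> mat2_mult (adj2 M) M = (1, 0, 0, 1)"
  by (cases M rule: prod_cases4) (simp add: algebra_simps)

lemma mult_one_left: "mat2_mult (1, 0, 0, 1) M = M"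
  by (cases M rule: prod_cases4) simp

lemma mult_one_right: "mat2_mult M (1, 0, 0, 1) = M"
  by (cases M rule: prod_cases4) simp

lemma factor_right: "mat2_det R = 1 \<Longrightarrow> M = mat2_mult (mat2_mult M (adj2 R)) R"
  by (simp add: mat_assoc adj_left mult_one_right)

locale dval =
  fixes v :: "'a::field \<Rightarrow> int"
  assumes dv: "discrete_valuation v"
begin

abbreviation P where "P \<equiv> vid v"

lemma v_mult: "x \<noteq> 0 \<Longrightarrow> y \<noteq> 0 \<Longrightarrow> v (x * y) = v x + v y"
  using dv unfolding discrete_valuation_def by blast

lemma v_ultra: "x \<noteq> 0 \<Longrightarrow> y \<noteq> 0 \<Longrightarrow> x + y \<noteq> 0 \<Longrightarrow> min (v x) (v y) \<le> v (x + y)"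
  using dv unfolding discrete_valuation_def by blast

lemma v_one: "v 1 = 0"
  using v_mult[of 1 1] by simp

lemma v_inverse: "x \<noteq> 0 \<Longrightarrow> v (inverse x) = - v x"
  using v_mult[of x "inverse x"] v_one by simp

lemma v_m1: "v (-1) = 0"
  using v_mult[of "-1" "-1"] v_one by simp

lemma v_uminus: "x \<noteq> 0 \<Longrightarrow> v (- x) = v x"
  using v_mult[of "-1" x] v_m1 by simp

lemma v_power: "x \<noteq> 0 \<Longrightarrow> v (x ^ n) = int n * v x"
  by (induction n) (simp_all add: v_one v_mult algebra_simps)

lemma P_zero[simp]: "0 \<in> P k"
  by (simp add: vid_def)

lemma P_add: "x \<in> P k \<Longrightarrow> y \<in> P k \<Longrightarrow> x + y \<in> P k"
  unfolding vid_def using v_ultra[of x y] by fastforce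

lemma P_uminus: "x \<in> P k \<Longrightarrow> - x \<in> P k"
  unfolding vid_def by (cases "x = 0") (auto simp: v_uminus)

lemma P_uminus_iff[simp]: "- x \<in> P k \<longleftrightarrow> x \<in> P k"
  using P_uminus[of x k] P_uminus[of "-x" k] by auto

lemma P_diff: "x \<in> P k \<Longrightarrow> y \<in> P k \<Longrightarrow> x - y \<in> P k"
  using P_add[of x k "-y"] by simp

lemma P_diff_sym: "x - y \<in> P k \<longleftrightarrow> y - x \<in> P k"
  using P_uminus_iff[of "x - y" k] by simp

lemma P_mono: "j \<le> k \<Longrightarrow> x \<in> P k \<Longrightarrow> x \<in> P j"
  unfolding vid_def by auto

lemma P_mult: "x \<in> P j \<Longrightarrow> y \<in> P k \<Longrightarrow> x * y \<in> P (j + k)"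
  unfolding vid_def by (cases "x = 0"; cases "y = 0") (auto simp: v_mult)

lemma P_mult_iff: "c \<noteq> 0 \<Longrightarrow> c * z \<in> P k \<longleftrightarrow> z \<in> P (k - v c)"
  unfolding vid_def by (cases "z = 0") (auto simp: v_mult)

lemma P_mult_iff': "c \<noteq> 0 \<Longrightarrow> z * c \<in> P k \<longleftrightarrow> z \<in> P (k - v c)"
  using P_mult_iff[of c z k] by (simp add: mult.commute)

lemma O_eq: "val_ring v = P 0"
  unfolding val_ring_def vid_def by auto

lemma P_sum: "(\<And>i. i \<in> A \<Longrightarrow> f i \<in> P k) \<Longrightarrow> sum f A \<in> P k"
proof (induction A rule: infinite_finite_induct)
  case (insert x F) then show ?case by (simp add: P_add)
qed auto

lemma P_limit: "(\<And>k. z \<in> P k) \<Longrightarrow> z = 0"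
proof (rule ccontr)
  assume h: "\<And>k. z \<in> P k" and "z \<noteq> 0"
  then have "v z + 1 \<le> v z" using h[of "v z + 1"] unfolding vid_def by auto
  then show False by simp
qed

lemma P_self: "z \<noteq> 0 \<Longrightarrow> z \<in> P (v z)"
  unfolding vid_def by auto

lemma P_not: "z \<noteq> 0 \<Longrightarrow> z \<in> P k \<longleftrightarrow> k \<le> v z"
  unfolding vid_def by auto

lemma P_one: "1 \<in> P 0" "1 \<notin> P 1"
  unfolding vid_def by (auto simp: v_one)

lemma P_prod_mem: "(\<And>i. i \<in> A \<Longrightarrow> f i \<in> P 0) \<Longrightarrow> prod f A \<in> P 0"
proof (induction A rule: infinite_finite_induct)
  case (insert x F) then show ?case using P_mult[of "f x" 0 "prod f F" 0] by simp
qed (auto simp: P_one)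

lemma P_pow_mem: "x \<in> P 0 \<Longrightarrow> x ^ n \<in> P 0"
  using P_prod_mem[of "{..<n}" "\<lambda>_. x"] by simp

lemma P_pow_cong: "x \<in> P 0 \<Longrightarrow> y \<in> P 0 \<Longrightarrow> x - y \<in> P k \<Longrightarrow> x ^ n - y ^ n \<in> P k"
proof -
  assume a: "x \<in> P 0" "y \<in> P 0" "x - y \<in> P k"
  have "(\<Sum>i<n. y^(n - Suc i) * x^i) \<in> P 0"
  proof (rule P_sum)
    fix i assume "i \<in> {..<n}"
    show "y^(n - Suc i) * x^i \<in> P 0"
      using P_mult[OF P_pow_mem[OF a(2)] P_pow_mem[OF a(1)]] by simp
  qed
  then show ?thesis using P_mult[OF a(3), of _ 0] by (simp add: power_diff_sumr2)
qed

definition unit_el where "unit_el z \<longleftrightarrow> z \<in> P 0 \<and> z \<notin> P 1"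

lemma unit_el_iff: "unit_el z \<longleftrightarrow> z \<noteq> 0 \<and> v z = 0"
  unfolding unit_el_def vid_def by auto

lemma unit_mult: "unit_el x \<Longrightarrow> unit_el y \<Longrightarrow> unit_el (x * y)"
  unfolding unit_el_iff by (auto simp: v_mult)

lemma unit_prod: "(\<And>i. i \<in> A \<Longrightarrow> unit_el (f i)) \<Longrightarrow> unit_el (prod f A)"
proof (induction A rule: infinite_finite_induct)
  case (insert x F) then show ?case using unit_mult by simp
qed (auto simp: unit_el_iff v_one)

lemma prod_cong_P: "(\<And>i. i \<in> A \<Longrightarrow> f i \<in> P 0 \<and> g i \<in> P 0 \<and> f i - g i \<in> P k)
   \<Longrightarrow> prod f A - prod g A \<in> P k"
proof (induction A rule: infinite_finite_induct)
  case (insert x F)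
  have e: "prod f (insert x F) - prod g (insert x F) =
     f x * (prod f F - prod g F) + (f x - g x) * prod g F"
    using insert.hyps by (simp add: algebra_simps)
  have 1: "f x * (prod f F - prod g F) \<in> P k"
    using P_mult[of "f x" 0 _ k] insert by simp
  have 2: "(f x - g x) * prod g F \<in> P k"
    using P_mult[of _ k "prod g F" 0] insert P_prod_mem[of F g] by simp
  show ?case unfolding e using P_add 1 2 by blast
qed auto

end

locale resf = dval +
  assumes fin: "finite (residue_field v)" and compl: "val_complete v"
begin

abbreviation R where "R \<equiv> residue_field v"
abbreviation q where "q \<equiv> card R"

lemma residue_alt: "residue v x = {y. y \<in> P 0 \<and> y - x \<in> P 1}"
  unfolding residue_def O_eq vid_def by auto

lemma res_mem: "x \<in> P 0 \<Longrightarrow> x \<in> residue v x"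
  unfolding residue_alt by simp

lemma res_eq_iff: "x \<in> P 0 \<Longrightarrow> y \<in> P 0 \<Longrightarrow> residue v x = residue v y \<longleftrightarrow> x - y \<in> P 1"
proof
  assume "x \<in> P 0" "residue v x = residue v y"
  then show "x - y \<in> P 1" using res_mem[of x] unfolding residue_alt by auto
next
  assume h: "x - y \<in> P 1"
  have "z - x \<in> P 1 \<longleftrightarrow> z - y \<in> P 1" for z
  proof
    assume "z - x \<in> P 1" then show "z - y \<in> P 1" using P_add[OF _ h] by fastforce
  next
    assume "z - y \<in> P 1" then show "z - x \<in> P 1" using P_diff[OF _ h] by fastforce
  qed
  then show "residue v x = residue v y" unfolding residue_alt by auto
qed

lemma R_iff: "l \<in> R \<longleftrightarrow> (\<exists>x\<in>P 0. l = residue v x)"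
  by (auto simp: residue_field_def O_eq)

definition rep where "rep l = (SOME x. x \<in> P 0 \<and> residue v x = l)"

lemma rep: "l \<in> R \<Longrightarrow> rep l \<in> P 0 \<and> residue v (rep l) = l"
  unfolding rep_def R_iff by (rule someI_ex) auto

lemma P1_P0: "x \<in> P 1 \<Longrightarrow> x \<in> P 0"
  using P_mono[of 0 1] by simp

lemma q_P1: "of_nat q \<in> P 1"
proof -
  define f where "f l = residue v (rep l + 1)" for l
  have fR: "f ` R \<subseteq> R"
  proof
    fix l' assume "l' \<in> f ` R"
    then obtain l where l: "l \<in> R" "l' = f l" by auto
    have "rep l + 1 \<in> P 0" using rep[OF l(1)] P_add P_one by blast
    then show "l' \<in> R" unfolding l(2) f_def by (auto simp: R_iff)
  qed
  have inj: "inj_on f R"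
  proof
    fix l l' assume l: "l \<in> R" "l' \<in> R" "f l = f l'"
    have r: "rep l \<in> P 0" "rep l' \<in> P 0" "residue v (rep l) = l" "residue v (rep l') = l'"
      using rep l by auto
    have "rep l + 1 \<in> P 0" "rep l' + 1 \<in> P 0" using r P_add P_one by auto
    then have "(rep l + 1) - (rep l' + 1) \<in> P 1"
      using l(3) unfolding f_def using res_eq_iff by blast
    then have "rep l - rep l' \<in> P 1" by simp
    then show "l = l'" using res_eq_iff[OF r(1,2)] r(3,4) by simp
  qed
  have fRR: "f ` R = R" using endo_inj_surj[OF fin fR inj] .
  have "sum rep R = sum (rep \<circ> f) R"
    using sum.reindex[OF inj, of rep] fRR by simp
  moreover have "sum (\<lambda>l. rep (f l) - (rep l + 1)) R \<in> P 1"
  proof (rule P_sum)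
    fix l assume l: "l \<in> R"
    have "f l \<in> R" using fR l by auto
    then have "rep (f l) \<in> P 0" "residue v (rep (f l)) = residue v (rep l + 1)"
      using rep f_def by auto
    moreover have "rep l + 1 \<in> P 0" using rep[OF l] P_add P_one by blast
    ultimately show "rep (f l) - (rep l + 1) \<in> P 1"
      using res_eq_iff by blast
  qed
  moreover have "sum (\<lambda>l. rep (f l) - (rep l + 1)) R = sum (rep \<circ> f) R - sum rep R - of_nat q"
    by (simp add: sum_subtractf sum.distrib)
  ultimately show ?thesis by simp
qed

lemma res0_R: "residue v 0 \<in> R"
  using R_iff by auto

lemma q_ge1: "q \<ge> 1"
  using res0_R fin by (metis One_nat_def Suc_leI card_gt_0_iff empty_iff)

lemma unit_pow: "unit_el a \<Longrightarrow> a ^ (q - 1) - 1 \<in> P 1"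
proof -
  assume a: "unit_el a"
  define R0 where "R0 = R - {residue v 0}"
  have fin0: "finite R0" using fin R0_def by simp
  have ru: "unit_el (rep l)" if "l \<in> R0" for l
  proof -
    have "rep l \<in> P 0" "residue v (rep l) = l" using rep that R0_def by auto
    moreover have "rep l \<notin> P 1"
      using res_eq_iff[of "rep l" 0] calculation that R0_def by auto
    ultimately show ?thesis unfolding unit_el_def by simp
  qed
  define f where "f l = residue v (a * rep l)" for l
  have fR: "f ` R0 \<subseteq> R0"
  proof
    fix l' assume "l' \<in> f ` R0"
    then obtain l where l: "l \<in> R0" "l' = f l" by auto
    have u: "unit_el (a * rep l)" using unit_mult[OF a ru[OF l(1)]] .
    then have "residue v (a * rep l) \<noteq> residue v 0"
      using res_eq_iff[of "a * rep l" 0] unfolding unit_el_def by auto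
    moreover have "l' \<in> R" unfolding l(2) f_def using u unfolding unit_el_def by (auto simp: R_iff)
    ultimately show "l' \<in> R0" using l unfolding R0_def f_def by auto
  qed
  have an: "a \<noteq> 0" "v a = 0" using a unit_el_iff by auto
  have inj: "inj_on f R0"
  proof
    fix l l' assume l: "l \<in> R0" "l' \<in> R0" "f l = f l'"
    have u: "unit_el (a * rep l)" "unit_el (a * rep l')" using unit_mult a ru l by auto
    then have "a * rep l - a * rep l' \<in> P 1"
      using l(3) res_eq_iff unfolding f_def unit_el_def by blast
    then have "a * (rep l - rep l') \<in> P 1" by (simp add: algebra_simps)
    then have "rep l - rep l' \<in> P 1" using P_mult_iff[OF an(1)] an(2) by simp
    moreover have r: "rep l \<in> P 0" "rep l' \<in> P 0" "residue v (rep l) = l" "residue v (rep l') = l'"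
      using rep l unfolding R0_def by auto
    ultimately show "l = l'" using res_eq_iff[OF r(1,2)] r(3,4) by simp
  qed
  have fRR: "f ` R0 = R0" using endo_inj_surj[OF fin0 fR inj] .
  have e1: "prod rep R0 = prod (rep \<circ> f) R0"
    using prod.reindex[OF inj, of rep] fRR by simp
  have "prod (rep \<circ> f) R0 - prod (\<lambda>l. a * rep l) R0 \<in> P 1"
  proof (rule prod_cong_P)
    fix l assume l: "l \<in> R0"
    have fl: "f l \<in> R0" using fR l by auto
    have u: "unit_el (a * rep l)" using unit_mult[OF a ru[OF l]] .
    have "rep (f l) \<in> P 0" "residue v (rep (f l)) = residue v (a * rep l)"
      using rep fl f_def R0_def by auto
    then show "(rep \<circ> f) l \<in> P 0 \<and> a * rep l \<in> P 0 \<and> (rep \<circ> f) l - a * rep l \<in> P 1"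
      using res_eq_iff u unfolding unit_el_def by auto
  qed
  moreover have "prod (\<lambda>l. a * rep l) R0 = a ^ card R0 * prod rep R0"
    by (simp add: prod.distrib)
  moreover have "card R0 = q - 1" unfolding R0_def using res0_R fin by simp
  ultimately have "prod rep R0 - a ^ (q - 1) * prod rep R0 \<in> P 1" using e1 by simp
  then have "prod rep R0 * (1 - a ^ (q - 1)) \<in> P 1" by (simp add: algebra_simps)
  moreover have "unit_el (prod rep R0)" using unit_prod ru by blast
  ultimately have "1 - a ^ (q - 1) \<in> P 1"
    using P_mult_iff[of "prod rep R0" "1 - a ^ (q - 1)" 1] unit_el_iff by (simp add: mult.commute)
  then show ?thesis using P_diff_sym by blast
qed

lemma pow_q_cong:
  assumes x: "x \<in> P 0" and y: "y \<in> P 0" and xy: "x - y \<in> P k" and k: "1 \<le> k"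
  shows "x ^ q - y ^ q \<in> P (k + 1)"
proof -
  define S where "S = (\<Sum>i<q. y^(q - Suc i) * x^i)"
  have xy1: "y - x \<in> P 1" using xy k P_mono P_diff_sym by blast
  have "(\<Sum>i<q. y^(q - Suc i) * x^i - x^(q - 1)) \<in> P 1"
  proof (rule P_sum)
    fix i assume i: "i \<in> {..<q}"
    have "x^(q - Suc i) * x^i = x^(q - 1)" using i by (simp flip: power_add)
    then have "y^(q - Suc i) * x^i - x^(q - 1) = (y^(q - Suc i) - x^(q - Suc i)) * x^i"
      by (simp add: algebra_simps)
    moreover have "y^(q - Suc i) - x^(q - Suc i) \<in> P 1" using P_pow_cong[OF y x xy1] .
    ultimately show "y^(q - Suc i) * x^i - x^(q - 1) \<in> P 1"
      using P_mult[of _ 1 "x^i" 0] P_pow_mem[OF x] by simp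
  qed
  then have "S - of_nat q * x^(q - 1) \<in> P 1" unfolding S_def by (simp add: sum_subtractf)
  moreover have "of_nat q * x^(q - 1) \<in> P 1"
    using P_mult[OF q_P1 P_pow_mem[OF x]] by simp
  ultimately have S: "S \<in> P 1" using P_add by fastforce
  have "x ^ q - y ^ q = (x - y) * S" unfolding S_def by (rule power_diff_sumr2)
  then show ?thesis using P_mult[OF xy S] by simp
qed


lemma P_conv: "s = L \<or> N \<le> v (s - L) \<longleftrightarrow> s - L \<in> P N"
  unfolding vid_def by auto

lemma teich_exists:
  assumes x: "unit_el x"
  shows "\<exists>L. L \<in> P 0 \<and> L ^ q = L \<and> L - x \<in> P 1"
proof -
  define s where "s n = x ^ (q ^ n)" for n
  have x0: "x \<in> P 0" using x unit_el_def by auto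
  have sP: "s n \<in> P 0" for n unfolding s_def using P_pow_mem[OF x0] .
  have sS: "s (Suc n) = s n ^ q" for n
  proof -
    have "x ^ (q ^ Suc n) = x ^ (q ^ n * q)" by (simp add: mult.commute)
    then show ?thesis unfolding s_def by (simp only: power_mult)
  qed
  have step: "s (Suc n) - s n \<in> P (int n + 1)" for n
  proof (induction n)
    case 0
    have "x ^ q - x = x * (x ^ (q - 1) - 1)"
      using q_ge1 by (simp add: algebra_simps flip: power_Suc)
    then show ?case using P_mult[OF x0 unit_pow[OF x]] by (simp add: s_def)
  next
    case (Suc n)
    show ?case using pow_q_cong[OF sP sP Suc] sS by (simp add: add.commute)
  qed
  have chain: "s m - s n \<in> P (int n + 1)" if "n \<le> m" for m n
    using that
  proof (induction m rule: dec_induct)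
    case (step m)
    have "s (Suc m) - s m \<in> P (int n + 1)" using step(1) P_mono[OF _ \<open>s (Suc m) - s m \<in> P (int m + 1)\<close>]
      by simp
    from P_add[OF this step(3)] show ?case by simp
  qed simp
  have "val_cauchy v s"
    unfolding val_cauchy_def P_conv
  proof
    fix N :: int
    show "\<exists>M. \<forall>m\<ge>M. \<forall>n\<ge>M. s m - s n \<in> P N"
    proof (intro exI allI impI)
      fix m n assume mn: "nat N \<le> m" "nat N \<le> n"
      show "s m - s n \<in> P N"
      proof (cases "n \<le> m")
        case True then show ?thesis using chain[OF True] P_mono[of N "int n + 1"] mn by simp
      next
        case False
        then have "s n - s m \<in> P (int m + 1)" using chain by simp
        then show ?thesis using P_mono[of N "int m + 1"] mn P_diff_sym by simp
      qed
    qed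
  qed
  then obtain L where "val_converges v s L" using compl val_complete_def by blast
  then have conv: "\<exists>M. \<forall>n\<ge>M. s n - L \<in> P N" for N unfolding val_converges_def P_conv by blast
  obtain M1 where M1: "\<forall>n\<ge>M1. s n - L \<in> P 1" using conv by blast
  have "s M1 - s 0 \<in> P 1" using chain[of 0 M1] by simp
  then have "(s M1 - s 0) - (s M1 - L) \<in> P 1" using P_diff M1 by blast
  then have Lx: "L - x \<in> P 1" by (simp add: s_def)
  have L0: "L \<in> P 0" using P_add[OF P1_P0[OF Lx] x0] by simp
  have "L ^ q - L \<in> P k" for k
  proof -
    obtain M where M: "\<forall>n\<ge>M. s n - L \<in> P (max k 1)" using conv by blast
    have a: "s M ^ q - L ^ q \<in> P (max k 1)" using P_pow_cong[OF sP L0] M by simp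
    have b: "s (Suc M) - L \<in> P (max k 1)" using M by simp
    have "L ^ q - L = (s (Suc M) - L) - (s M ^ q - L ^ q)" using sS by simp
    then have "L ^ q - L \<in> P (max k 1)" using P_diff[OF b a] by simp
    then show ?thesis using P_mono[of k "max k 1"] by simp
  qed
  then have "L ^ q - L = 0" by (rule P_limit)
  then have "L ^ q = L" by simp
  then show ?thesis using L0 Lx by blast
qed

lemma pow_q_split: "(y::'a) ^ q = y * y ^ (q - 1)"
proof -
  obtain k where "q = Suc k" using q_ge1 by (cases q) auto
  then show ?thesis by simp
qed

lemma pow_q_eq: fixes y :: 'a assumes "y ^ (q - 1) = 1" shows "y ^ q = y"
proof -
  have "y ^ q = y * y ^ (q - 1)" by (rule pow_q_split)
  also have "\<dots> = y" using assms by simp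
  finally show ?thesis .
qed

lemma teich_unique:
  assumes y: "y \<in> P 0" "y ^ (q - 1) = 1" and y': "y' \<in> P 0" "y' ^ (q - 1) = 1"
    and yy: "y - y' \<in> P 1"
  shows "y = y'"
proof -
  have *: "y - y' \<in> P (int k + 1)" for k
  proof (induction k)
    case (Suc k)
    have "y ^ q - y' ^ q \<in> P (int k + 1 + 1)" using pow_q_cong[OF y(1) y'(1) Suc] by simp
    then show ?case using pow_q_eq[OF y(2)] pow_q_eq[OF y'(2)] by (simp add: add.commute)
  qed (use yy in simp)
  have "y - y' \<in> P k" for k using *[of "nat k"] P_mono[of k "int (nat k) + 1"] by simp
  then show ?thesis using P_limit[of "y - y'"] by simp
qed

lemma teich_prop: "l \<in> R \<Longrightarrow> teich v l \<in> P 0 \<and> residue v (teich v l) = l"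
proof (cases "l = residue v 0")
  case True then show ?thesis by (simp add: teich_def)
next
  case False
  assume "l \<in> R"
  then obtain x where x: "x \<in> P 0" "l = residue v x" unfolding R_iff by blast
  have "x \<notin> P 1" using False x res_eq_iff[of x 0] by auto
  then have ux: "unit_el x" using x unit_el_def by simp
  obtain L where L: "L \<in> P 0" "L ^ q = L" "L - x \<in> P 1" using teich_exists[OF ux] by blast
  have "L \<notin> P 1" using \<open>x \<notin> P 1\<close> P_diff[OF _ L(3), of L] by auto
  then have "L \<noteq> 0" by auto
  have "L * L ^ (q - 1) = L * 1" using L(2) pow_q_split[of L] by simp
  then have L1: "L ^ (q - 1) = 1" using \<open>L \<noteq> 0\<close> by simp
  have Ll: "residue v L = l" using res_eq_iff[OF L(1) x(1)] L(3) x(2) by simp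
  have ex1: "\<exists>!y. y \<in> val_ring v \<and> y ^ (card (residue_field v) - 1) = 1 \<and> residue v y = l"
  proof
    show "L \<in> val_ring v \<and> L ^ (card (residue_field v) - 1) = 1 \<and> residue v L = l"
      using L(1) L1 Ll O_eq by simp
  next
    fix y assume "y \<in> val_ring v \<and> y ^ (card (residue_field v) - 1) = 1 \<and> residue v y = l"
    then have y: "y \<in> P 0" "y ^ (q - 1) = 1" "residue v y = l" using O_eq by auto
    then have "y - L \<in> P 1" using res_eq_iff[OF y(1) L(1)] Ll by simp
    then show "y = L" using teich_unique[OF y(1,2) L(1) L1] by simp
  qed
  then have "teich v l \<in> val_ring v \<and> residue v (teich v l) = l"
    unfolding teich_def using False theI'[OF ex1] by simp
  then show ?thesis using O_eq by simp
qed

lemma teich_inj: "l \<in> R \<Longrightarrow> l' \<in> R \<Longrightarrow> teich v l - teich v l' \<in> P 1 \<Longrightarrow> teich v l = teich v l'"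
proof -
  assume a: "l \<in> R" "l' \<in> R" "teich v l - teich v l' \<in> P 1"
  have "l = l'" using res_eq_iff[of "teich v l" "teich v l'"] teich_prop[OF a(1)] teich_prop[OF a(2)] a(3)
    by simp
  then show ?thesis by simp
qed

end

locale padic = resf +
  fixes \<pi> :: 'a
  assumes unif: "uniformizer v \<pi>"
begin

abbreviation I where "I \<equiv> teich_digits v \<pi>"

lemma pi_nz: "\<pi> \<noteq> 0" and v_pi: "v \<pi> = 1"
  using unif uniformizer_def by auto

lemma pi_P1: "\<pi> \<in> P 1" using pi_nz v_pi P_self by fastforce

lemma pi_P0: "\<pi> \<in> P 0" using P1_P0 pi_P1 by blast

lemma digits_0: "I 0 = {0}"
  unfolding teich_digits_def by auto

lemma digits_Suc: "I (Suc m) = {teich v l + \<pi> * k | l k. l \<in> R \<and> k \<in> I m}"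
proof (intro equalityI subsetI)
  fix x assume "x \<in> I (Suc m)"
  then obtain lam where x: "x = (\<Sum>i<Suc m. \<pi> ^ i * teich v (lam i))" and lam: "\<forall>i<Suc m. lam i \<in> R"
    unfolding teich_digits_def by blast
  have "x = teich v (lam 0) + \<pi> * (\<Sum>i<m. \<pi> ^ i * teich v (lam (Suc i)))"
    unfolding x sum.lessThan_Suc_shift by (simp add: sum_distrib_left mult.assoc)
  moreover have "(\<Sum>i<m. \<pi> ^ i * teich v (lam (Suc i))) \<in> I m"
    unfolding teich_digits_def using lam by auto
  ultimately show "x \<in> {teich v l + \<pi> * k | l k. l \<in> R \<and> k \<in> I m}" using lam by blast
next
  fix x assume "x \<in> {teich v l + \<pi> * k | l k. l \<in> R \<and> k \<in> I m}"
  then obtain l k where x: "x = teich v l + \<pi> * k" and l: "l \<in> R" and k: "k \<in> I m" by blast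
  obtain lam where k': "k = (\<Sum>i<m. \<pi> ^ i * teich v (lam i))" and lam: "\<forall>i<m. lam i \<in> R"
    using k unfolding teich_digits_def by blast
  define lam' where "lam' i = (if i = 0 then l else lam (i - 1))" for i
  have "x = (\<Sum>i<Suc m. \<pi> ^ i * teich v (lam' i))"
    unfolding x k' sum.lessThan_Suc_shift by (simp add: sum_distrib_left mult.assoc lam'_def)
  moreover have "\<forall>i<Suc m. lam' i \<in> R" using lam l unfolding lam'_def by auto
  ultimately show "x \<in> I (Suc m)" unfolding teich_digits_def by blast
qed

lemma digits_P0: "k \<in> I m \<Longrightarrow> k \<in> P 0"
proof (induction m arbitrary: k)
  case 0 then show ?case using digits_0 by simp
next
  case (Suc m)
  then obtain l a where k: "k = teich v l + \<pi> * a" "l \<in> R" "a \<in> I m" using digits_Suc by blast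
  show ?case unfolding k(1) using P_add[OF conjunct1[OF teich_prop[OF k(2)]]] P_mult[OF pi_P0 Suc.IH[OF k(3)]]
    by simp
qed

lemma digits_inj: "k \<in> I m \<Longrightarrow> k' \<in> I m \<Longrightarrow> k - k' \<in> P (int m) \<Longrightarrow> k = k'"
proof (induction m arbitrary: k k')
  case 0 then show ?case using digits_0 by simp
next
  case (Suc m)
  obtain l a where k: "k = teich v l + \<pi> * a" "l \<in> R" "a \<in> I m" using digits_Suc Suc.prems by blast
  obtain l' a' where k': "k' = teich v l' + \<pi> * a'" "l' \<in> R" "a' \<in> I m" using digits_Suc Suc.prems by blast
  have d: "k - k' = (teich v l - teich v l') + \<pi> * (a - a')" using k k' by (simp add: algebra_simps)
  have "\<pi> * (a - a') \<in> P 1"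
    using P_mult[OF pi_P1 P_diff[OF digits_P0[OF k(3)] digits_P0[OF k'(3)]]] by simp
  moreover have "k - k' \<in> P 1" using Suc.prems(3) P_mono[of 1 "int (Suc m)"] by simp
  ultimately have "teich v l - teich v l' \<in> P 1" using P_diff d by fastforce
  then have tt: "teich v l = teich v l'" using teich_inj k(2) k'(2) by blast
  then have "\<pi> * (a - a') \<in> P (int (Suc m))" using d Suc.prems(3) by simp
  then have "a - a' \<in> P (int m)" using P_mult_iff[OF pi_nz] v_pi by simp
  then have "a = a'" using Suc.IH k(3) k'(3) by blast
  then show ?case using tt k k' by simp
qed

lemma digits_ex: "x \<in> P 0 \<Longrightarrow> \<exists>k\<in>I m. x - k \<in> P (int m)"
proof (induction m arbitrary: x)
  case 0 then show ?case using digits_0 by simp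
next
  case (Suc m)
  define l where "l = residue v x"
  have l: "l \<in> R" using Suc.prems R_iff l_def by blast
  define t where "t = teich v l"
  have t: "t \<in> P 0" "residue v t = residue v x" using teich_prop[OF l] t_def l_def by auto
  then have xt: "x - t \<in> P 1" using res_eq_iff[OF Suc.prems t(1)] by simp
  define y where "y = (x - t) / \<pi>"
  have py: "\<pi> * y = x - t" unfolding y_def using pi_nz by simp
  then have "y \<in> P 0" using xt P_mult_iff[OF pi_nz, of y 1] v_pi by simp
  then obtain a where a: "a \<in> I m" "y - a \<in> P (int m)" using Suc.IH by blast
  have "x - (t + \<pi> * a) = \<pi> * (y - a)" using py by (simp add: algebra_simps)
  moreover have "\<pi> * (y - a) \<in> P (int (Suc m))" using P_mult[OF pi_P1 a(2)] by (simp add: add.commute)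
  moreover have "t + \<pi> * a \<in> I (Suc m)" unfolding digits_Suc using l a t_def by blast
  ultimately show ?case by metis
qed


lemma zero_digits: "0 \<in> I k"
proof -
  have "(\<Sum>i<k. \<pi> ^ i * teich v (residue v 0)) = 0" by (simp add: teich_def)
  then show ?thesis unfolding teich_digits_def using res0_R by force
qed

lemma P_scale: "c \<noteq> 0 \<Longrightarrow> z \<in> P j \<Longrightarrow> k \<le> j + v c \<Longrightarrow> c * z \<in> P k"
  using P_mult_iff[of c z k] P_mono[of "k - v c" j z] by simp

lemma P_nz: "c \<noteq> 0 \<Longrightarrow> k \<le> v c \<Longrightarrow> c \<in> P k"
  using P_not by blast

lemma P0_v: "c \<noteq> 0 \<Longrightarrow> c \<in> P k \<Longrightarrow> k \<le> v c"
  using P_not by blast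

lemma v_pw: "v (\<pi> ^ m) = int m"
  using v_power[OF pi_nz] v_pi by simp

lemma v_ipw: "v (inverse (\<pi> ^ m)) = - int m"
  using v_inverse[of "\<pi> ^ m"] pi_nz v_pw by simp

lemma SL2O_iff: "(a, b, c, d) \<in> SL2 (val_ring v) \<longleftrightarrow>
   a \<in> P 0 \<and> b \<in> P 0 \<and> c \<in> P 0 \<and> d \<in> P 0 \<and> a * d - b * c = 1"
  unfolding SL2_def O_eq by simp

lemma SL2O_det: "M \<in> SL2 (val_ring v) \<Longrightarrow> mat2_det M = 1"
  by (cases M rule: prod_cases4) (simp add: SL2O_iff)

lemma SL2O_mult: "A \<in> SL2 (val_ring v) \<Longrightarrow> B \<in> SL2 (val_ring v) \<Longrightarrow> mat2_mult A B \<in> SL2 (val_ring v)"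
proof (cases A rule: prod_cases4; cases B rule: prod_cases4)
  fix a b c d a' b' c' d'
  assume A: "A \<in> SL2 (val_ring v)" "A = (a, b, c, d)" and B: "B \<in> SL2 (val_ring v)" "B = (a', b', c', d')"
  have pm: "x \<in> P 0 \<Longrightarrow> y \<in> P 0 \<Longrightarrow> z \<in> P 0 \<Longrightarrow> w \<in> P 0 \<Longrightarrow> x * y + z * w \<in> P 0" for x y z w
    using P_add[OF P_mult[of x 0 y 0] P_mult[of z 0 w 0]] by simp
  have "mat2_det (mat2_mult A B) = mat2_det A * mat2_det B" by (rule det_mult)
  then have "mat2_det (mat2_mult A B) = 1" using SL2O_det[OF A(1)] SL2O_det[OF B(1)] by simp
  then show ?thesis using A B pm unfolding SL2O_iff by (simp add: SL2O_iff)
qed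

lemma SL2O_adj: "A \<in> SL2 (val_ring v) \<Longrightarrow> adj2 A \<in> SL2 (val_ring v)"
  by (cases A rule: prod_cases4) (auto simp: SL2O_iff algebra_simps)

lemmas vs = v_mult v_inverse v_pw v_ipw pi_nz v_pi


lemma SL2O_intro: "mat2_det M = 1 \<Longrightarrow> M = (a, b, c, d) \<Longrightarrow> a \<in> P 0 \<Longrightarrow> b \<in> P 0 \<Longrightarrow> c \<in> P 0 \<Longrightarrow> d \<in> P 0
  \<Longrightarrow> M \<in> SL2 (val_ring v)"
  by (simp add: SL2O_iff)

lemma det_cr: "mat2_det (coset_rep \<pi> i) = 1"
  by (cases i) (auto simp: pi_nz)

lemma det_T: "(t::'a) \<noteq> 0 \<Longrightarrow> mat2_det (t, 0, x, inverse t) = 1"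
  by simp

lemma det_TA: "(t::'a) \<noteq> 0 \<Longrightarrow> mat2_det (mat2_mult (t, 0, x, inverse t) (adj2 (coset_rep \<pi> i))) = 1"
proof -
  assume t: "t \<noteq> 0"
  have "mat2_det (mat2_mult (t, 0, x, inverse t) (adj2 (coset_rep \<pi> i)))
     = mat2_det (t, 0, x, inverse t) * mat2_det (adj2 (coset_rep \<pi> i))" by (rule det_mult)
  also have "\<dots> = 1" unfolding det_adj det_cr det_T[OF t] by simp
  finally show ?thesis .
qed

lemma stepB_I:
  assumes t: "t \<noteq> 0" and n: "0 \<le> v t" and x: "x \<in> P (- v t)"
  shows "\<exists>i\<in>coset_index v \<pi>. mat2_mult (t, 0, x, inverse t) (adj2 (coset_rep \<pi> i)) \<in> SL2 (val_ring v)"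
proof -
  define m where "m = nat (v t)"
  have mi: "int m = v t" using n m_def by simp
  have tx: "t * x \<in> P 0" using P_scale[OF t x] by simp
  obtain k where k: "k \<in> I (2 * m)" "t * x - k \<in> P (int (2 * m))" using digits_ex[OF tx] by blast
  have idx: "Inl (m, k) \<in> coset_index v \<pi>" unfolding coset_index_def using k(1) by blast
  have eq: "mat2_mult (t, 0, x, inverse t) (adj2 (coset_rep \<pi> (Inl (m, k)))) =
      (t * inverse (\<pi> ^ m), 0, (inverse t * inverse (\<pi> ^ m)) * (t * x - k), inverse t * \<pi> ^ m)"
    using t pi_nz by (simp add: field_simps)
  have e1: "t * inverse (\<pi> ^ m) \<in> P 0" by (rule P_nz) (use t mi in \<open>simp_all add: vs\<close>)
  have e4: "inverse t * \<pi> ^ m \<in> P 0" by (rule P_nz) (use t mi in \<open>simp_all add: vs\<close>)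
  have e3: "(inverse t * inverse (\<pi> ^ m)) * (t * x - k) \<in> P 0"
    by (rule P_scale[OF _ k(2)]) (use t mi in \<open>simp_all add: vs\<close>)
  show ?thesis using SL2O_intro[OF det_TA[OF t] eq e1 P_zero e3 e4] idx by blast
qed


lemma stepB_II:
  assumes t: "t \<noteq> 0" and n: "v t < 0" and x: "x \<in> P (v t)"
  shows "\<exists>i\<in>coset_index v \<pi>. mat2_mult (t, 0, x, inverse t) (adj2 (coset_rep \<pi> i)) \<in> SL2 (val_ring v)"
proof -
  define m where "m = nat (- v t)"
  have mi: "int m = - v t" using n m_def by simp
  have idx: "Inr (m, 0) \<in> coset_index v \<pi>" unfolding coset_index_def using zero_digits mi n by auto
  have eq: "mat2_mult (t, 0, x, inverse t) (adj2 (coset_rep \<pi> (Inr (m, 0)))) =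
      (0, t * \<pi> ^ m, - (inverse t * inverse (\<pi> ^ m)), \<pi> ^ m * x)"
    using t pi_nz by (simp add: field_simps)
  have e2: "t * \<pi> ^ m \<in> P 0" by (rule P_nz) (use t mi in \<open>simp_all add: vs\<close>)
  have e3: "inverse t * inverse (\<pi> ^ m) \<in> P 0" by (rule P_nz) (use t mi in \<open>simp_all add: vs\<close>)
  have e4: "\<pi> ^ m * x \<in> P 0"
    by (rule P_scale[OF _ x]) (use t mi in \<open>simp_all add: vs\<close>)
  have "mat2_mult (t, 0, x, inverse t) (adj2 (coset_rep \<pi> (Inr (m, 0)))) \<in> SL2 (val_ring v)"
    by (rule SL2O_intro[OF det_TA[OF t] eq P_zero e2 _ e4]) (use e3 in simp)
  then show ?thesis using idx by blast
qed

lemma stepB_III: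
  assumes t: "t \<noteq> 0" and x: "x \<noteq> 0" and k1: "v x < v t" and k2: "v x < - v t"
  shows "\<exists>i\<in>coset_index v \<pi>. mat2_mult (t, 0, x, inverse t) (adj2 (coset_rep \<pi> i)) \<in> SL2 (val_ring v)"
proof -
  define m where "m = nat (- v x)"
  have mi: "int m = - v x" using k1 k2 m_def by simp
  have m1: "1 \<le> m" using mi k1 k2 by simp
  define k0 where "k0 = - inverse (x * \<pi> * t)"
  have k0nz: "k0 \<noteq> 0" using t x pi_nz k0_def by simp
  have k0P: "k0 \<in> P 0" by (rule P_nz[OF k0nz]) (use t x k1 k2 in \<open>simp add: k0_def v_uminus vs\<close>)
  obtain k where k: "k \<in> I (2 * m - 1)" "k0 - k \<in> P (int (2 * m - 1))" using digits_ex[OF k0P] by blast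
  define d where "d = k - k0"
  have dP: "d \<in> P (2 * int m - 1)" using k(2) P_diff_sym m1 d_def by (simp add: of_nat_diff)
  have kd: "k = k0 + d" using d_def by simp
  have idx: "Inr (m, k) \<in> coset_index v \<pi>" unfolding coset_index_def using k(1) m1 by auto
  have eq: "mat2_mult (t, 0, x, inverse t) (adj2 (coset_rep \<pi> (Inr (m, k)))) =
      (inverse (\<pi> ^ m) * inverse x - (t * inverse (\<pi> ^ m) * \<pi>) * d, t * \<pi> ^ m,
       - ((inverse (\<pi> ^ m) * x * \<pi>) * d), \<pi> ^ m * x)"
    using t x pi_nz unfolding kd k0_def by (simp add: field_simps)
  have e1a: "inverse (\<pi> ^ m) * inverse x \<in> P 0" by (rule P_nz) (use t x mi pi_nz in \<open>simp_all add: vs\<close>)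
  have e1b: "(t * inverse (\<pi> ^ m) * \<pi>) * d \<in> P 0"
    by (rule P_scale[OF _ dP]) (use t mi k1 pi_nz in \<open>simp_all add: vs\<close>)
  have e2: "t * \<pi> ^ m \<in> P 0" by (rule P_nz) (use t mi k1 in \<open>simp_all add: vs\<close>)
  have e3: "(inverse (\<pi> ^ m) * x * \<pi>) * d \<in> P 0"
    by (rule P_scale[OF _ dP]) (use x mi pi_nz in \<open>simp_all add: vs\<close>)
  have e4: "\<pi> ^ m * x \<in> P 0" by (rule P_nz) (use x mi in \<open>simp_all add: vs\<close>)
  have "mat2_mult (t, 0, x, inverse t) (adj2 (coset_rep \<pi> (Inr (m, k)))) \<in> SL2 (val_ring v)"
    by (rule SL2O_intro[OF det_TA[OF t] eq P_diff[OF e1a e1b] e2 _ e4]) (use e3 in simp)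
  then show ?thesis using idx by blast
qed

lemma stepB:
  assumes t: "t \<noteq> 0"
  shows "\<exists>i\<in>coset_index v \<pi>. mat2_mult (t, 0, x, inverse t) (adj2 (coset_rep \<pi> i)) \<in> SL2 (val_ring v)"
proof (cases "0 \<le> v t")
  case True
  show ?thesis
  proof (cases "x \<in> P (- v t)")
    case True then show ?thesis using stepB_I t \<open>0 \<le> v t\<close> by blast
  next
    case False
    then have "x \<noteq> 0" "v x < - v t" unfolding vid_def by auto
    then show ?thesis using stepB_III t True by simp
  qed
next
  case False
  show ?thesis
  proof (cases "x \<in> P (v t)")
    case True then show ?thesis using stepB_II t False by simp
  next
    case nx: False
    then have "x \<noteq> 0" "v x < v t" unfolding vid_def by auto
    then show ?thesis using stepB_III t False by simp
  qed
qed


lemma stepA: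
  assumes g: "g \<in> SL2 (UNIV :: 'a set)"
  shows "\<exists>t x h. t \<noteq> 0 \<and> h \<in> SL2 (val_ring v) \<and> g = mat2_mult h (t, 0, x, inverse t)"
proof (cases g rule: prod_cases4)
  case (fields a b c d)
  have det: "a * d - b * c = 1" using g fields unfolding SL2_def by simp
  show ?thesis
  proof (cases "d \<noteq> 0 \<and> (b = 0 \<or> v d \<le> v b)")
    case True
    have bd: "b / d \<in> P 0"
    proof (cases "b = 0")
      case False
      then show ?thesis using True by (intro P_nz) (simp_all add: divide_inverse vs)
    qed simp
    have h: "(1, b / d, 0, 1) \<in> SL2 (val_ring v)" using bd P_one by (simp add: SL2O_iff)
    have "g = mat2_mult (1, b / d, 0, 1) (inverse d, 0, c, inverse (inverse d))"
      using True det fields by (simp add: field_simps)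
    moreover have "inverse d \<noteq> 0" using True by simp
    ultimately show ?thesis using h by blast
  next
    case False
    then have b: "b \<noteq> 0" and bd': "d = 0 \<or> v b < v d" using det by auto
    have db: "d / b \<in> P 0"
    proof (cases "d = 0")
      case False
      then show ?thesis using b bd' by (intro P_nz) (simp_all add: divide_inverse vs)
    qed simp
    have h: "(0, 1, -1, d / b) \<in> SL2 (val_ring v)" using db P_one by (simp add: SL2O_iff)
    have "g = mat2_mult (0, 1, -1, d / b) (inverse b, 0, a, inverse (inverse b))"
      using b det fields by (simp add: field_simps)
    moreover have "inverse b \<noteq> 0" using b by simp
    ultimately show ?thesis using h by blast
  qed
qed

lemma existence:
  assumes g: "g \<in> SL2 (UNIV :: 'a set)"
  shows "\<exists>i\<in>coset_index v \<pi>. \<exists>h\<in>SL2 (val_ring v). g = mat2_mult h (coset_rep \<pi> i)"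
proof -
  obtain t x h1 where t: "t \<noteq> 0" and h1: "h1 \<in> SL2 (val_ring v)"
    and g1: "g = mat2_mult h1 (t, 0, x, inverse t)" using stepA[OF g] by blast
  obtain i where i: "i \<in> coset_index v \<pi>"
    and H: "mat2_mult (t, 0, x, inverse t) (adj2 (coset_rep \<pi> i)) \<in> SL2 (val_ring v)"
    using stepB[OF t] by blast
  have "(t, 0, x, inverse t) = mat2_mult (mat2_mult (t, 0, x, inverse t) (adj2 (coset_rep \<pi> i))) (coset_rep \<pi> i)"
    by (rule factor_right[OF det_cr])
  then have "g = mat2_mult (mat2_mult h1 (mat2_mult (t, 0, x, inverse t) (adj2 (coset_rep \<pi> i)))) (coset_rep \<pi> i)"
    using g1 by (simp add: mat_assoc)
  then show ?thesis using i SL2O_mult[OF h1 H] by blast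
qed

lemma pw_le: "\<pi> ^ m * inverse (\<pi> ^ m') \<in> P 0 \<Longrightarrow> m' \<le> m"
  using P0_v[of "\<pi> ^ m * inverse (\<pi> ^ m')" 0] pi_nz by (simp add: vs)

lemma pw_le': "inverse (\<pi> ^ m) * \<pi> ^ m' \<in> P 0 \<Longrightarrow> m \<le> m'"
  using pw_le[of m' m] by (simp add: mult.commute)

lemma unit_1pkk: "k \<in> P 0 \<Longrightarrow> k' \<in> P 0 \<Longrightarrow> 1 + \<pi> * k * k' \<noteq> 0 \<and> v (1 + \<pi> * k * k') = 0"
proof -
  assume k: "k \<in> P 0" "k' \<in> P 0"
  have a: "\<pi> * k * k' \<in> P 1" using P_mult[OF P_mult[OF pi_P1 k(1)] k(2)] by simp
  have "1 + \<pi> * k * k' \<notin> P 1"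
  proof
    assume "1 + \<pi> * k * k' \<in> P 1"
    then have "(1 + \<pi> * k * k') - \<pi> * k * k' \<in> P 1" using P_diff a by blast
    then show False using P_one by simp
  qed
  moreover have "1 + \<pi> * k * k' \<in> P 0" using P_add[OF P_one(1) P1_P0[OF a]] .
  ultimately show ?thesis unfolding vid_def by auto
qed

lemma uniq:
  assumes i: "i \<in> coset_index v \<pi>" and j: "j \<in> coset_index v \<pi>"
    and H: "mat2_mult (coset_rep \<pi> i) (adj2 (coset_rep \<pi> j)) \<in> SL2 (val_ring v)"
  shows "i = j"
proof (cases i)
  case (Inl p)
  then obtain m k where ii: "i = Inl (m, k)" and k: "k \<in> I (2 * m)"
    using i unfolding coset_index_def by auto
  show ?thesis
  proof (cases j)
    case (Inl p')
    then obtain m' k' where jj: "j = Inl (m', k')" and k': "k' \<in> I (2 * m')"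
      using j unfolding coset_index_def by auto
    have "mat2_mult (coset_rep \<pi> i) (adj2 (coset_rep \<pi> j)) =
      (\<pi> ^ m * inverse (\<pi> ^ m'), 0, (inverse (\<pi> ^ m) * inverse (\<pi> ^ m')) * (k - k'),
       inverse (\<pi> ^ m) * \<pi> ^ m')"
      unfolding ii jj using pi_nz by (simp add: field_simps)
    then have e: "\<pi> ^ m * inverse (\<pi> ^ m') \<in> P 0" "(inverse (\<pi> ^ m) * inverse (\<pi> ^ m')) * (k - k') \<in> P 0"
       "inverse (\<pi> ^ m) * \<pi> ^ m' \<in> P 0" using H by (simp_all add: SL2O_iff)
    have mm: "m = m'" using pw_le[OF e(1)] pw_le'[OF e(3)] by simp
    have "k - k' \<in> P (int (2 * m))" using e(2) P_mult_iff[of "inverse (\<pi> ^ m) * inverse (\<pi> ^ m')" "k - k'" 0]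
      pi_nz mm by (simp add: vs)
    then have "k = k'" using digits_inj k k' mm by blast
    then show ?thesis using ii jj mm by simp
  next
    case (Inr p')
    then obtain m' k' where jj: "j = Inr (m', k')" and k': "k' \<in> I (2 * m' - 1)" and m1: "1 \<le> m'"
      using j unfolding coset_index_def by auto
    have "mat2_mult (coset_rep \<pi> i) (adj2 (coset_rep \<pi> j)) =
      (- (\<pi> ^ m * inverse (\<pi> ^ m') * \<pi> * k'), \<pi> ^ m * \<pi> ^ m',
       - ((inverse (\<pi> ^ m) * inverse (\<pi> ^ m')) * (1 + \<pi> * k * k')),
       inverse (\<pi> ^ m) * k * \<pi> ^ m')"
      unfolding ii jj using pi_nz by (simp add: field_simps)
    then have e: "(inverse (\<pi> ^ m) * inverse (\<pi> ^ m')) * (1 + \<pi> * k * k') \<in> P 0"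
      using H by (simp add: SL2O_iff)
    have u: "1 + \<pi> * k * k' \<noteq> 0" "v (1 + \<pi> * k * k') = 0"
      using unit_1pkk[OF digits_P0[OF k] digits_P0[OF k']] by auto
    have "0 \<le> v ((inverse (\<pi> ^ m) * inverse (\<pi> ^ m')) * (1 + \<pi> * k * k'))"
      using P0_v[OF _ e] u pi_nz by simp
    then show ?thesis using u m1 pi_nz by (simp add: vs)
  qed
next
  case (Inr p)
  then obtain m k where ii: "i = Inr (m, k)" and k: "k \<in> I (2 * m - 1)" and m1: "1 \<le> m"
    using i unfolding coset_index_def by auto
  show ?thesis
  proof (cases j)
    case (Inl p')
    then obtain m' k' where jj: "j = Inl (m', k')" and k': "k' \<in> I (2 * m')"
      using j unfolding coset_index_def by auto
    have "mat2_mult (coset_rep \<pi> i) (adj2 (coset_rep \<pi> j)) =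
      (\<pi> ^ m * inverse (\<pi> ^ m') * k', - (\<pi> ^ m * \<pi> ^ m'),
       (inverse (\<pi> ^ m) * inverse (\<pi> ^ m')) * (1 + \<pi> * k * k'),
       - (inverse (\<pi> ^ m) * \<pi> * k * \<pi> ^ m'))"
      unfolding ii jj using pi_nz by (simp add: field_simps)
    then have e: "(inverse (\<pi> ^ m) * inverse (\<pi> ^ m')) * (1 + \<pi> * k * k') \<in> P 0"
      using H by (simp add: SL2O_iff)
    have u: "1 + \<pi> * k * k' \<noteq> 0" "v (1 + \<pi> * k * k') = 0"
      using unit_1pkk[OF digits_P0[OF k] digits_P0[OF k']] by auto
    have "0 \<le> v ((inverse (\<pi> ^ m) * inverse (\<pi> ^ m')) * (1 + \<pi> * k * k'))"
      using P0_v[OF _ e] u pi_nz by simp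
    then show ?thesis using u m1 pi_nz by (simp add: vs)
  next
    case (Inr p')
    then obtain m' k' where jj: "j = Inr (m', k')" and k': "k' \<in> I (2 * m' - 1)" and m1': "1 \<le> m'"
      using j unfolding coset_index_def by auto
    have "mat2_mult (coset_rep \<pi> i) (adj2 (coset_rep \<pi> j)) =
      (\<pi> ^ m * inverse (\<pi> ^ m'), 0, (inverse (\<pi> ^ m) * inverse (\<pi> ^ m') * \<pi>) * (k - k'),
       inverse (\<pi> ^ m) * \<pi> ^ m')"
      unfolding ii jj using pi_nz by (simp add: field_simps)
    then have e: "\<pi> ^ m * inverse (\<pi> ^ m') \<in> P 0" "(inverse (\<pi> ^ m) * inverse (\<pi> ^ m') * \<pi>) * (k - k') \<in> P 0"
       "inverse (\<pi> ^ m) * \<pi> ^ m' \<in> P 0" using H by (simp_all add: SL2O_iff)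
    have mm: "m = m'" using pw_le[OF e(1)] pw_le'[OF e(3)] by simp
    have "k - k' \<in> P (2 * int m - 1)"
      using e(2) P_mult_iff[of "inverse (\<pi> ^ m) * inverse (\<pi> ^ m') * \<pi>" "k - k'" 0]
      pi_nz mm by (simp add: vs)
    then have "k - k' \<in> P (int (2 * m - 1))" using m1 by (simp add: of_nat_diff)
    then have "k = k'" using digits_inj k k' mm by blast
    then show ?thesis using ii jj mm by simp
  qed
qed

end

theorem lemma2p3:
  fixes v :: "'a::field_char_0 \<Rightarrow> int" and \<pi> :: 'a
  assumes "p_adic_field v"
    and "uniformizer v \<pi>"
  shows "(\<forall>i\<in>coset_index v \<pi>. coset_rep \<pi> i \<in> SL2 UNIV) \<and>
         (\<forall>g\<in>SL2 UNIV. \<exists>!i. i \<in> coset_index v \<pi> \<and>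
              (\<exists>h\<in>SL2 (val_ring v). g = mat2_mult h (coset_rep \<pi> i)))"
proof -
  interpret padic v \<pi>
    by unfold_locales (use assms in \<open>auto simp: p_adic_field_def\<close>)
  have part1: "coset_rep \<pi> i \<in> SL2 UNIV" for i
    using det_cr[of i] by (cases "coset_rep \<pi> i" rule: prod_cases4) (simp add: SL2_def)
  have part2: "\<exists>!i. i \<in> coset_index v \<pi> \<and> (\<exists>h\<in>SL2 (val_ring v). g = mat2_mult h (coset_rep \<pi> i))"
    if g: "g \<in> SL2 UNIV" for g
  proof -
    obtain i h where i: "i \<in> coset_index v \<pi>" and h: "h \<in> SL2 (val_ring v)"
      and gi: "g = mat2_mult h (coset_rep \<pi> i)" using existence[OF g] by blast
    show ?thesis
    proof (rule ex1I[of _ i])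
      show "i \<in> coset_index v \<pi> \<and> (\<exists>h\<in>SL2 (val_ring v). g = mat2_mult h (coset_rep \<pi> i))"
        using i h gi by blast
    next
      fix j assume "j \<in> coset_index v \<pi> \<and> (\<exists>h\<in>SL2 (val_ring v). g = mat2_mult h (coset_rep \<pi> j))"
      then obtain h' where j: "j \<in> coset_index v \<pi>" and h': "h' \<in> SL2 (val_ring v)"
        and gj: "g = mat2_mult h' (coset_rep \<pi> j)" by blast
      have "coset_rep \<pi> j = mat2_mult (mat2_mult (adj2 h') h') (coset_rep \<pi> j)"
        unfolding adj_left[OF SL2O_det[OF h']] mult_one_left ..
      also have "\<dots> = mat2_mult (adj2 h') g" using gj by (simp add: mat_assoc)
      also have "\<dots> = mat2_mult (mat2_mult (adj2 h') h) (coset_rep \<pi> i)" using gi by (simp add: mat_assoc)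
      finally have cj: "coset_rep \<pi> j = mat2_mult (mat2_mult (adj2 h') h) (coset_rep \<pi> i)" .
      have "mat2_mult (coset_rep \<pi> j) (adj2 (coset_rep \<pi> i)) = mat2_mult (adj2 h') h"
        unfolding cj mat_assoc adj_right[OF det_cr] mult_one_right ..
      then have "mat2_mult (coset_rep \<pi> j) (adj2 (coset_rep \<pi> i)) \<in> SL2 (val_ring v)"
        using SL2O_mult[OF SL2O_adj[OF h'] h] by simp
      then show "j = i" using uniq[OF j i] by blast
    qed
  qed
  show ?thesis using part1 part2 by blast
qed

end
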